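(* The conditional rewriting system $R$ is confluent.
   Context: Terms are built from variables and the constants $C,T,F,K,S$ by binary application (left-associative). $\mathrm{CLC}$ is the conditional system with rules $C\,T\,x\,y\to x$; $C\,F\,x\,y\to y$; $C\,z\,x\,y\to x \Leftarrow x=y$; $K\,x\,y\to x$; $S\,x\,y\,z\to x\,z\,(y\,z)$, where $=$ is convertibility in the system itself, defined by levels ($R_0$: condition empty; $R_{n+1}$: $=$ is conversion of $\to_{R_n}$; $\to_{\mathrm{CLC}}=\bigcup_n\to_{R_n}$); $=_{\mathrm{CLC}}$ is conversion in $\mathrm{CLC}$. $R$ is the conditional rewriting system (closed under contexts) with rules: $C\,T\,x\,y\to x$; $C\,z\,x\,y\to y \Leftarrow z=_{\mathrm{CLC}}F$; $C\,z\,x\,y\to x\Leftarrow z\neq_{\mathrm{CLC}}F \wedge x=_{\mathrm{CLC}}y$; $K\,x\,y\to x$; $S\,x\,y\,z\to x\,z\,(y\,z)$. *)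

theory Defs
  imports Main
begin

text \<open>Combinatory terms over variables of type 'v, with constants C,T,F,K,S and
binary application (left-associative: x y z means App (App x y) z).\<close>
datatype 'v trm = Var 'v | Cc | Tc | Fc | Kc | Sc | App "'v trm" "'v trm"

inductive_set ctxcl :: "('v trm \<times> 'v trm) set \<Rightarrow> ('v trm \<times> 'v trm) set"
  for Rt :: "('v trm \<times> 'v trm) set" where
  root: "(s, t) \<in> Rt \<Longrightarrow> (s, t) \<in> ctxcl Rt"
| appL: "(s, t) \<in> ctxcl Rt \<Longrightarrow> (App s u, App t u) \<in> ctxcl Rt"
| appR: "(s, t) \<in> ctxcl Rt \<Longrightarrow> (App u s, App u t) \<in> ctxcl Rt"

definition conv :: "('a \<times> 'a) set \<Rightarrow> ('a \<times> 'a) set" where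
  "conv r = (r \<union> r\<inverse>)\<^sup>*"

text \<open>Root steps of CLC, where the condition x = y of the third rule is
interpreted by the relation E.\<close>
definition clc_root :: "('v trm \<times> 'v trm) set \<Rightarrow> ('v trm \<times> 'v trm) set" where
  "clc_root E =
     {(App (App (App Cc Tc) x) y, x) | x y. True}
   \<union> {(App (App (App Cc Fc) x) y, y) | x y. True}
   \<union> {(App (App (App Cc z) x) y, x) | x y z. (x, y) \<in> E}
   \<union> {(App (App Kc x) y, x) | x y. True}
   \<union> {(App (App (App Sc x) y) z, App (App x z) (App y z)) | x y z. True}"

text \<open>Levels: R_0 with empty condition (conditional rule not applicable),
R_{n+1} with the condition read as conversion of R_n.\<close>
primrec clc_lvl :: "nat \<Rightarrow> ('v trm \<times> 'v trm) set" where
  "clc_lvl 0 = ctxcl (clc_root {})"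
| "clc_lvl (Suc n) = ctxcl (clc_root (conv (clc_lvl n)))"

definition clc_step :: "('v trm \<times> 'v trm) set" where
  "clc_step = (\<Union>n. clc_lvl n)"

definition clc_eq :: "('v trm \<times> 'v trm) set" where
  "clc_eq = conv clc_step"

definition R_root :: "('v trm \<times> 'v trm) set" where
  "R_root =
     {(App (App (App Cc Tc) x) y, x) | x y. True}
   \<union> {(App (App (App Cc z) x) y, y) | x y z. (z, Fc) \<in> clc_eq}
   \<union> {(App (App (App Cc z) x) y, x) | x y z. (z, Fc) \<notin> clc_eq \<and> (x, y) \<in> clc_eq}
   \<union> {(App (App Kc x) y, x) | x y. True}
   \<union> {(App (App (App Sc x) y) z, App (App x z) (App y z)) | x y z. True}"

definition R_step :: "('v trm \<times> 'v trm) set" where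
  "R_step = ctxcl R_root"

definition confluent_rel :: "('a \<times> 'a) set \<Rightarrow> bool" where
  "confluent_rel r \<longleftrightarrow>
     (\<forall>a b c. (a, b) \<in> r\<^sup>* \<and> (a, c) \<in> r\<^sup>* \<longrightarrow> (\<exists>d. (b, d) \<in> r\<^sup>* \<and> (c, d) \<in> r\<^sup>*))"

end

theory Submission
  imports Defs
begin


datatype el = At nat | Arr "el list" el

definition ap :: "el set \<Rightarrow> el set \<Rightarrow> el set" where
  "ap X Y = {b. \<exists>\<beta>. set \<beta> \<subseteq> Y \<and> Arr \<beta> b \<in> X}"

definition kk :: "el set" where "kk = {Arr [a] (Arr \<beta> a) | a \<beta>. True}"
definition ss :: "el set" where
 "ss = {Arr [Arr \<eta> (Arr (map snd ps) b)] (Arr (map (\<lambda>p. Arr (fst p) (snd p)) ps) (Arr (\<eta> @ concat (map fst ps)) b)) | \<eta> ps b. True}"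
definition cc :: "el set" where
 "cc = {Arr [At 0] (Arr [a] (Arr [] a)) | a. True} \<union> {Arr [At 1] (Arr [] (Arr [a] a)) | a. True}
       \<union> {Arr [] (Arr [a] (Arr [a] a)) | a. True}"

lemma ap_kk: "ap (ap kk X) Y = X"
  unfolding ap_def kk_def by auto (metis empty_set empty_subsetI)

lemma ap_cc: "ap (ap (ap cc Z) X) Y = {a. (At 0 \<in> Z \<and> a \<in> X) \<or> (At 1 \<in> Z \<and> a \<in> Y) \<or> (a \<in> X \<and> a \<in> Y)}"
  unfolding ap_def cc_def
  apply auto
  subgoal for x by (rule exI[of _ "[]"], rule conjI, simp, rule exI[of _ "[x]"], rule conjI, simp, rule exI[of _ "[At 0]"], simp)
  subgoal for x by (rule exI[of _ "[x]"], rule conjI, simp, rule exI[of _ "[]"], rule conjI, simp, rule exI[of _ "[At 1]"], simp)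
  subgoal for x by (rule exI[of _ "[x]"], rule conjI, simp, rule exI[of _ "[x]"], rule conjI, simp, rule exI[of _ "[]"], simp)
  done

lemma ap_ss: "ap (ap (ap ss X) Y) Z = ap (ap X Z) (ap Y Z)"
proof (rule set_eqI, rule iffI)
  fix b assume "b \<in> ap (ap (ap ss X) Y) Z"
  then obtain \<eta> ps where h: "Arr \<eta> (Arr (map snd ps) b) \<in> X" "\<forall>p\<in>set ps. Arr (fst p) (snd p) \<in> Y"
     "set \<eta> \<subseteq> Z" "\<forall>p\<in>set ps. set (fst p) \<subseteq> Z"
    unfolding ap_def ss_def by (auto simp: subset_iff) blast
  show "b \<in> ap (ap X Z) (ap Y Z)"
  proof -
    have 1: "set (map snd ps) \<subseteq> ap Y Z" using h unfolding ap_def by (auto, metis fst_conv snd_conv)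
    have 2: "Arr (map snd ps) b \<in> ap X Z" using h unfolding ap_def by auto
    show ?thesis using 1 2 unfolding ap_def[of "ap X Z"] by blast
  qed
next
  fix b assume "b \<in> ap (ap X Z) (ap Y Z)"
  then obtain \<delta> \<eta> where h: "\<forall>d\<in>set \<delta>. \<exists>e. set e \<subseteq> Z \<and> Arr e d \<in> Y" "set \<eta> \<subseteq> Z" "Arr \<eta> (Arr \<delta> b) \<in> X"
    unfolding ap_def by blast
  define ps where "ps = map (\<lambda>d. (SOME e. set e \<subseteq> Z \<and> Arr e d \<in> Y, d)) \<delta>"
  have m: "map snd ps = \<delta>" unfolding ps_def by (induct \<delta>) auto
  have p: "\<forall>p\<in>set ps. set (fst p) \<subseteq> Z \<and> Arr (fst p) (snd p) \<in> Y"
  proof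
    fix p assume "p \<in> set ps"
    then obtain d where d: "d \<in> set \<delta>" "p = (SOME e. set e \<subseteq> Z \<and> Arr e d \<in> Y, d)" unfolding ps_def by auto
    have "\<exists>e. set e \<subseteq> Z \<and> Arr e d \<in> Y" using h(1) d(1) by blast
    from someI_ex[OF this] show "set (fst p) \<subseteq> Z \<and> Arr (fst p) (snd p) \<in> Y" using d(2) by simp
  qed
  have 1: "Arr (map (\<lambda>p. Arr (fst p) (snd p)) ps) (Arr (\<eta> @ concat (map fst ps)) b) \<in> ap ss X"
      proof -
    have "Arr [Arr \<eta> (Arr \<delta> b)] (Arr (map (\<lambda>p. Arr (fst p) (snd p)) ps) (Arr (\<eta> @ concat (map fst ps)) b)) \<in> ss"
      unfolding ss_def m[symmetric] by blast
    then show ?thesis unfolding ap_def using h(3) by (intro CollectI exI[of _ "[Arr \<eta> (Arr \<delta> b)]"]) simp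
  qed
  have 2: "Arr (\<eta> @ concat (map fst ps)) b \<in> ap (ap ss X) Y"
  proof -
    have "set (map (\<lambda>p. Arr (fst p) (snd p)) ps) \<subseteq> Y" using p by auto
    then show ?thesis using 1 unfolding ap_def[of "ap ss X" Y] by blast
  qed
  show "b \<in> ap (ap (ap ss X) Y) Z"
  proof -
    have "set (\<eta> @ concat (map fst ps)) \<subseteq> Z" using p h(2) by auto
    then show ?thesis using 2 unfolding ap_def[of "ap (ap ss X) Y" Z] by blast
  qed
qed


primrec ev :: "'v trm \<Rightarrow> el set" where
  "ev (Var v) = {}" | "ev Cc = cc" | "ev Tc = {At 0}" | "ev Fc = {At 1}"
| "ev Kc = kk" | "ev Sc = ss" | "ev (App a b) = ap (ev a) (ev b)"

definition evrel :: "('v trm \<times> 'v trm) set" where "evrel = {(a,b). ev a = ev b}"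

lemma clc_root_ev: "E \<subseteq> evrel \<Longrightarrow> (s,t) \<in> clc_root E \<Longrightarrow> ev s = ev t"
  unfolding clc_root_def evrel_def using ap_ss ap_kk
  by (auto simp: ap_cc)

lemma ctxcl_ev: "(s,t) \<in> ctxcl A \<Longrightarrow> A \<subseteq> evrel \<Longrightarrow> ev s = ev t"
  by (induct rule: ctxcl.induct) (auto simp: evrel_def)

lemma conv_ev: assumes r: "r \<subseteq> evrel" and ab: "(a,b) \<in> conv r" shows "ev a = ev b"
  using ab unfolding conv_def
proof (induct rule: rtrancl_induct)
  case base then show ?case by simp
next
  case (step y z) then show ?case using r by (auto simp: evrel_def)
qed

lemma clc_root_ev': "E \<subseteq> evrel \<Longrightarrow> clc_root E \<subseteq> evrel"
proof (rule subsetI, clarify)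
  fix a b assume "E \<subseteq> evrel" "(a,b) \<in> clc_root E"
  from clc_root_ev[OF this] show "(a,b) \<in> evrel" by (simp add: evrel_def)
qed

lemma ctxcl_ev': "A \<subseteq> evrel \<Longrightarrow> ctxcl A \<subseteq> evrel"
proof (rule subsetI, clarify)
  fix a b assume "A \<subseteq> evrel" "(a,b) \<in> ctxcl A"
  from ctxcl_ev[OF this(2,1)] show "(a,b) \<in> evrel" by (simp add: evrel_def)
qed

lemma lvl_ev: "(clc_lvl n :: ('v trm \<times> 'v trm) set) \<subseteq> evrel"
proof (induct n)
  case 0 
  have "clc_root {} \<subseteq> (evrel :: ('v trm \<times> 'v trm) set)" by (rule clc_root_ev') simp
  then show ?case unfolding clc_lvl.simps by (rule ctxcl_ev')
next
  case (Suc n) 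
  have "conv (clc_lvl n) \<subseteq> (evrel :: ('v trm \<times> 'v trm) set)"
  proof (rule subsetI, clarify)
    fix a b :: "'v trm" assume "(a,b) \<in> conv (clc_lvl n)"
    from conv_ev[OF Suc this] show "(a,b) \<in> evrel" by (simp add: evrel_def)
  qed
  then have "clc_root (conv (clc_lvl n)) \<subseteq> (evrel :: ('v trm \<times> 'v trm) set)" by (rule clc_root_ev')
  then show ?case unfolding clc_lvl.simps by (rule ctxcl_ev')
qed

lemma TF_not_eq: "(Tc, Fc) \<notin> (clc_eq :: ('v trm \<times> 'v trm) set)"
proof
  assume tf: "(Tc, Fc) \<in> (clc_eq :: ('v trm \<times> 'v trm) set)"
  have st: "(clc_step :: ('v trm \<times> 'v trm) set) \<subseteq> evrel" using lvl_ev unfolding clc_step_def by blast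
  show False using conv_ev[OF st tf[unfolded clc_eq_def]] by simp
qed



section \<open>Properties of the CLC levels\<close>

lemma ctxcl_mono': "(s,t) \<in> ctxcl A \<Longrightarrow> A \<subseteq> B \<Longrightarrow> (s,t) \<in> ctxcl B"
  by (induct rule: ctxcl.induct) (auto intro: ctxcl.intros)

lemma ctxcl_mono: "A \<subseteq> B \<Longrightarrow> ctxcl A \<subseteq> ctxcl B"
  using ctxcl_mono' by auto

lemma clc_root_mono: "E \<subseteq> E' \<Longrightarrow> clc_root E \<subseteq> clc_root E'"
  unfolding clc_root_def by blast

lemma conv_mono: "r \<subseteq> s \<Longrightarrow> conv r \<subseteq> conv s"
  unfolding conv_def by (rule rtrancl_mono) blast

lemma lvl_Suc: "clc_lvl n \<subseteq> clc_lvl (Suc n)"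
proof (induct n)
  case 0 show ?case by (simp add: ctxcl_mono clc_root_mono)
next
  case (Suc n) show ?case using Suc
    by (simp only: clc_lvl.simps) (intro ctxcl_mono clc_root_mono conv_mono)
qed

lemma lvl_mono: "m \<le> n \<Longrightarrow> clc_lvl m \<subseteq> clc_lvl n"
  by (rule lift_Suc_mono_le[of clc_lvl, OF lvl_Suc])

lemma conv_step_lvl: "(x,y) \<in> conv clc_step \<Longrightarrow> \<exists>n. (x,y) \<in> conv (clc_lvl n)"
  unfolding conv_def
proof (induct rule: rtrancl_induct)
  case base then show ?case by auto
next
  case (step y z)
  then obtain n where n: "(x,y) \<in> (clc_lvl n \<union> (clc_lvl n)\<inverse>)\<^sup>*" by auto
  from step(2) obtain m where m: "(y,z) \<in> clc_lvl m \<union> (clc_lvl m)\<inverse>" unfolding clc_step_def by auto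
  let ?k = "max n m"
  have "(x,y) \<in> (clc_lvl ?k \<union> (clc_lvl ?k)\<inverse>)\<^sup>*"
    using n by (rule rtrancl_mono[THEN subsetD, rotated]) (use lvl_mono[of n ?k] in auto)
  moreover have "(y,z) \<in> clc_lvl ?k \<union> (clc_lvl ?k)\<inverse>" using m lvl_mono[of m ?k] by auto
  ultimately show ?case by (meson rtrancl.rtrancl_into_rtrancl)
qed

lemma lvl_step: "(a,b) \<in> clc_lvl n \<Longrightarrow> (a,b) \<in> clc_step"
  unfolding clc_step_def by auto

lemma eq_refl[simp]: "(a,a) \<in> clc_eq" unfolding clc_eq_def conv_def by simp
lemma eq_sym: "(a,b) \<in> clc_eq \<Longrightarrow> (b,a) \<in> clc_eq"
  unfolding clc_eq_def conv_def by (metis converse_Un converse_converse rtrancl_converseI sup_commute)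
lemma eq_trans: "(a,b) \<in> clc_eq \<Longrightarrow> (b,c) \<in> clc_eq \<Longrightarrow> (a,c) \<in> clc_eq"
  unfolding clc_eq_def conv_def by (rule rtrancl_trans)
lemma step_eq: "(a,b) \<in> clc_step \<Longrightarrow> (a,b) \<in> clc_eq"
  unfolding clc_eq_def conv_def by auto

lemma step_appL: "(a,b) \<in> clc_step \<Longrightarrow> (App a c, App b c) \<in> clc_step"
  unfolding clc_step_def by (auto intro: ctxcl.appL) (metis clc_lvl.simps ctxcl.appL not0_implies_Suc)
lemma step_appR: "(a,b) \<in> clc_step \<Longrightarrow> (App c a, App c b) \<in> clc_step"
  unfolding clc_step_def by (auto intro: ctxcl.appR) (metis clc_lvl.simps ctxcl.appR not0_implies_Suc)

lemma eq_appL: "(a,b) \<in> clc_eq \<Longrightarrow> (App a c, App b c) \<in> clc_eq"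
  unfolding clc_eq_def conv_def
proof (induct rule: rtrancl_induct)
  case base then show ?case by simp
next
  case (step y z) then show ?case
    by (auto intro: rtrancl_into_rtrancl step_appL)
qed
lemma eq_appR: "(a,b) \<in> clc_eq \<Longrightarrow> (App c a, App c b) \<in> clc_eq"
  unfolding clc_eq_def conv_def
proof (induct rule: rtrancl_induct)
  case base then show ?case by simp
next
  case (step y z) then show ?case
    by (auto intro: rtrancl_into_rtrancl step_appR)
qed
lemma eq_app: "(a,a') \<in> clc_eq \<Longrightarrow> (b,b') \<in> clc_eq \<Longrightarrow> (App a b, App a' b') \<in> clc_eq"
  by (meson eq_appL eq_appR eq_trans)

lemma root_step: "(s,t) \<in> clc_root E \<Longrightarrow> (s,t) \<in> ctxcl (clc_root E)"
  by (rule ctxcl.root)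

lemma eq_CT: "(App (App (App Cc Tc) x) y, x) \<in> clc_eq"
  by (rule step_eq, rule lvl_step[of _ _ 0]) (auto simp: clc_root_def intro!: ctxcl.root)
lemma eq_CF: "(App (App (App Cc Fc) x) y, y) \<in> clc_eq"
  by (rule step_eq, rule lvl_step[of _ _ 0]) (auto simp: clc_root_def intro!: ctxcl.root)
lemma eq_K: "(App (App Kc x) y, x) \<in> clc_eq"
  by (rule step_eq, rule lvl_step[of _ _ 0]) (auto simp: clc_root_def intro!: ctxcl.root)
lemma eq_S: "(App (App (App Sc x) y) z, App (App x z) (App y z)) \<in> clc_eq"
  by (rule step_eq, rule lvl_step[of _ _ 0]) (auto simp: clc_root_def intro!: ctxcl.root)
lemma eq_C: "(x,y) \<in> clc_eq \<Longrightarrow> (App (App (App Cc z) x) y, x) \<in> clc_eq"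
proof -
  assume "(x,y) \<in> clc_eq"
  then obtain n where "(x,y) \<in> conv (clc_lvl n)" using conv_step_lvl unfolding clc_eq_def by blast
  then have "(App (App (App Cc z) x) y, x) \<in> clc_lvl (Suc n)"
    by (auto simp: clc_root_def intro!: ctxcl.root)
  then show ?thesis by (rule step_eq[OF lvl_step])
qed
lemma eq_Cz: "(z,Fc) \<in> clc_eq \<Longrightarrow> (App (App (App Cc z) x) y, y) \<in> clc_eq"
  by (meson eq_CF eq_appL eq_appR eq_trans)

section \<open>Parallel reduction for R\<close>

inductive_set par :: "('v trm \<times> 'v trm) set" where
  refl: "(t,t) \<in> par"
| app: "(a,a') \<in> par \<Longrightarrow> (b,b') \<in> par \<Longrightarrow> (App a b, App a' b') \<in> par"
| cT: "(x,x') \<in> par \<Longrightarrow> (App (App (App Cc Tc) x) y, x') \<in> par"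
| cF: "(z,Fc) \<in> clc_eq \<Longrightarrow> (y,y') \<in> par \<Longrightarrow> (App (App (App Cc z) x) y, y') \<in> par"
| cX: "(z,Fc) \<notin> clc_eq \<Longrightarrow> (x,y) \<in> clc_eq \<Longrightarrow> (x,x') \<in> par \<Longrightarrow> (App (App (App Cc z) x) y, x') \<in> par"
| k: "(x,x') \<in> par \<Longrightarrow> (App (App Kc x) y, x') \<in> par"
| s: "(x,x') \<in> par \<Longrightarrow> (y,y') \<in> par \<Longrightarrow> (z,z') \<in> par \<Longrightarrow>
      (App (App (App Sc x) y) z, App (App x' z') (App y' z')) \<in> par"

lemma par_eq: "(a,b) \<in> par \<Longrightarrow> (a,b) \<in> clc_eq"
proof (induct rule: par.induct)
  case (refl t) then show ?case by simp
next
  case (app a a' b b') then show ?case using eq_app[of a a' b b'] by simp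
next
  case (cT x x' y) then show ?case using eq_trans[OF eq_CT[of x y], of x'] by simp
next
  case (cF z y y' x) then show ?case using eq_trans[OF eq_Cz[of z x y], of y'] by simp
next
  case (cX z x y x') then show ?case using eq_trans[OF eq_C[of x y z], of x'] by simp
next
  case (k x x' y) then show ?case using eq_trans[OF eq_K[of x y], of x'] by simp
next
  case (s x x' y y' z z') 
  have "(App (App x z) (App y z), App (App x' z') (App y' z')) \<in> clc_eq"
    using s by (intro eq_app) simp_all
  then show ?case using eq_trans[OF eq_S[of x y z]] by simp
qed

lemma par_const: "(Cc,w) \<in> par \<Longrightarrow> w = Cc" "(Tc,w) \<in> par \<Longrightarrow> w = Tc"
  "(Kc,w) \<in> par \<Longrightarrow> w = Kc" "(Sc,w) \<in> par \<Longrightarrow> w = Sc"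
  by (auto elim: par.cases)

lemma par_C1: "(App Cc z, w) \<in> par \<Longrightarrow> \<exists>z'. w = App Cc z' \<and> (z,z') \<in> par"
  by (erule par.cases) (auto intro: par.refl dest: par_const)
lemma par_C2: "(App (App Cc z) x, w) \<in> par \<Longrightarrow> \<exists>z' x'. w = App (App Cc z') x' \<and> (z,z') \<in> par \<and> (x,x') \<in> par"
  by (erule par.cases) (auto intro: par.refl dest: par_C1)
lemma par_K1: "(App Kc x, w) \<in> par \<Longrightarrow> \<exists>x'. w = App Kc x' \<and> (x,x') \<in> par"
  by (erule par.cases) (auto intro: par.refl dest: par_const)
lemma par_S1: "(App Sc x, w) \<in> par \<Longrightarrow> \<exists>x'. w = App Sc x' \<and> (x,x') \<in> par"
  by (erule par.cases) (auto intro: par.refl dest: par_const)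
lemma par_S2: "(App (App Sc x) y, w) \<in> par \<Longrightarrow> \<exists>x' y'. w = App (App Sc x') y' \<and> (x,x') \<in> par \<and> (y,y') \<in> par"
  by (erule par.cases) (auto intro: par.refl dest: par_S1)

primrec larg :: "'v trm \<Rightarrow> 'v trm" where "larg (App a b) = a"
primrec rarg :: "'v trm \<Rightarrow> 'v trm" where "rarg (App a b) = b"

primrec dev :: "'v trm \<Rightarrow> 'v trm" where
  "dev (Var v) = Var v" | "dev Cc = Cc" | "dev Tc = Tc" | "dev Fc = Fc" | "dev Kc = Kc" | "dev Sc = Sc"
| "dev (App a b) =
   (if (\<exists>z x. a = App (App Cc z) x) then
      (if rarg (larg a) = Tc then rarg (dev a) else if (rarg (larg a), Fc) \<in> clc_eq then dev b
       else if (rarg a, b) \<in> clc_eq then rarg (dev a) else App (dev a) (dev b))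
    else if (\<exists>x. a = App Kc x) then rarg (dev a)
    else if (\<exists>x y. a = App (App Sc x) y) then App (App (rarg (larg (dev a))) (dev b)) (App (rarg (dev a)) (dev b))
    else App (dev a) (dev b))"

lemma dev_C2: "dev (App (App Cc z) x) = App (App Cc (dev z)) (dev x)" by simp
lemma dev_K1: "dev (App Kc x) = App Kc (dev x)" by simp
lemma dev_S2: "dev (App (App Sc x) y) = App (App Sc (dev x)) (dev y)" by simp

lemma dev_C: "dev (App (App (App Cc z) x) y) = (if z = Tc then dev x else if (z, Fc) \<in> clc_eq then dev y
      else if (x,y) \<in> clc_eq then dev x else App (App (App Cc (dev z)) (dev x)) (dev y))"
  by (simp only: dev.simps(7)[of "App (App Cc z) x"] dev_C2) auto
lemma dev_K: "dev (App (App Kc x) y) = dev x"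
  by (simp only: dev.simps(7)[of "App Kc x"] dev_K1) auto
lemma dev_S: "dev (App (App (App Sc x) y) z) = App (App (dev x) (dev z)) (App (dev y) (dev z))"
  by (simp only: dev.simps(7)[of "App (App Sc x) y"] dev_S2) auto

lemma dev_other: "(\<And>z x. a \<noteq> App (App Cc z) x) \<Longrightarrow> (\<And>x. a \<noteq> App Kc x) \<Longrightarrow> (\<And>x y. a \<noteq> App (App Sc x) y)
   \<Longrightarrow> dev (App a b) = App (dev a) (dev b)"
  by (simp only: dev.simps(7)) auto

lemma TF_ne: "(Tc, Fc) \<notin> clc_eq" by (rule TF_not_eq)

lemma par_dev_refl: "(t, dev t) \<in> par"
proof (induct t rule: measure_induct_rule[of size])
  case (less t)
  show ?case
  proof (cases "\<exists>z x y. t = App (App (App Cc z) x) y")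
    case True
    then obtain z x y where t: "t = App (App (App Cc z) x) y" by blast
    have ih: "(z, dev z) \<in> par" "(x, dev x) \<in> par" "(y, dev y) \<in> par" using less t by auto
    show ?thesis unfolding t dev_C using ih TF_ne by (auto intro: par.intros)
  next
    case nC: False
    show ?thesis
    proof (cases "\<exists>x y. t = App (App Kc x) y")
      case True
      then obtain x y where t: "t = App (App Kc x) y" by blast
      show ?thesis unfolding t dev_K using less t by (auto intro: par.intros)
    next
      case nK: False
      show ?thesis
      proof (cases "\<exists>x y z. t = App (App (App Sc x) y) z")
        case True
        then obtain x y z where t: "t = App (App (App Sc x) y) z" by blast
        have ih: "(x, dev x) \<in> par" "(y, dev y) \<in> par" "(z, dev z) \<in> par" using less t by auto
        show ?thesis unfolding t dev_S using ih by (rule par.s)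
      next
        case nS: False
        show ?thesis
        proof (cases t)
          case (App a b)
          have "dev t = App (dev a) (dev b)" unfolding App using nC nK nS App by (intro dev_other) auto
          then show ?thesis using less App by (auto intro: par.intros)
        qed (auto intro: par.intros)
      qed
    qed
  qed
qed

lemma eq_par: "(z,z') \<in> par \<Longrightarrow> ((z,Fc) \<in> clc_eq) = ((z',Fc) \<in> clc_eq)"
  using par_eq eq_sym eq_trans by blast

lemma par_dev: "(t,s) \<in> par \<Longrightarrow> (s, dev t) \<in> par"
proof (induct rule: par.induct)
  case (refl t) then show ?case by (rule par_dev_refl)
next
  case (cT x x' y) then show ?case by (simp add: dev_C)
next
  case (cF z y y' x) then show ?case using TF_ne by (auto simp: dev_C)
next
  case (cX z x y x') then show ?case by (auto simp: dev_C)
next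
  case (k x x' y) then show ?case by (simp add: dev_K)
next
  case (s x x' y y' z z') then show ?case unfolding dev_S by (intro par.app) 
next
  case (app a a' b b')
  show ?case
  proof (cases "\<exists>z x. a = App (App Cc z) x")
    case True
    then obtain z x where a: "a = App (App Cc z) x" by blast
    obtain z' x' where a': "a' = App (App Cc z') x'" and zz: "(z,z') \<in> par" and xx: "(x,x') \<in> par"
      using par_C2[OF app(1)[unfolded a]] by blast
    have "(App (App Cc z') x', App (App Cc (dev z)) (dev x)) \<in> par" using app(2) a a' by (simp add: dev_C2)
    then have zd: "(z', dev z) \<in> par" and xd: "(x', dev x) \<in> par" using par_C2 by blast+
    have bd: "(b', dev b) \<in> par" by (rule app(4))
    show ?thesis
    proof (cases "z = Tc")
      case True
      then have "z' = Tc" using zz par_const by blast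
      then show ?thesis using True a a' xd by (simp add: dev_C par.cT)
    next
      case nT: False
      show ?thesis
      proof (cases "(z,Fc) \<in> clc_eq")
        case True
        then have "(z',Fc) \<in> clc_eq" using eq_par[OF zz] by simp
        then show ?thesis using True nT a a' bd by (simp add: dev_C par.cF)
      next
        case nF: False
        then have nF': "(z',Fc) \<notin> clc_eq" using eq_par[OF zz] by simp
        show ?thesis
        proof (cases "(x,b) \<in> clc_eq")
          case True
          have "(x',b') \<in> clc_eq"
            using eq_trans[OF eq_trans[OF eq_sym[OF par_eq[OF xx]] True] par_eq[OF app(3)]] .
          then show ?thesis using True nT nF nF' a a' xd by (simp add: dev_C par.cX)
        next
          case False
          then show ?thesis using nT nF a a' xd zd bd by (simp add: dev_C par.app par.refl)
        qed
      qed
    qed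
  next
    case nC: False
    show ?thesis
    proof (cases "\<exists>x. a = App Kc x")
      case True
      then obtain x where a: "a = App Kc x" by blast
      obtain x' where a': "a' = App Kc x'" using par_K1[OF app(1)[unfolded a]] by blast
      have "(App Kc x', App Kc (dev x)) \<in> par" using app(2) a a' by (simp add: dev_K1)
      then have xd: "(x', dev x) \<in> par" using par_K1 by blast
      show ?thesis using a a' xd by (simp add: dev_K par.k)
    next
      case nK: False
      show ?thesis
      proof (cases "\<exists>x y. a = App (App Sc x) y")
        case True
        then obtain x y where a: "a = App (App Sc x) y" by blast
        obtain x' y' where a': "a' = App (App Sc x') y'" using par_S2[OF app(1)[unfolded a]] by blast
        have "(App (App Sc x') y', App (App Sc (dev x)) (dev y)) \<in> par" using app(2) a a' by (simp add: dev_S2)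
        then have xd: "(x', dev x) \<in> par" and yd: "(y', dev y) \<in> par" using par_S2 by blast+
        show ?thesis using a a' xd yd app(4) by (simp add: dev_S par.s)
      next
        case nS: False
        have "dev (App a b) = App (dev a) (dev b)" using nC nK nS by (intro dev_other) auto
        then show ?thesis using app(2,4) by (simp add: par.app)
      qed
    qed
  qed
qed

lemma Rroot_par: "(s,t) \<in> R_root \<Longrightarrow> (s,t) \<in> par"
  unfolding R_root_def by (auto intro: par.intros)

lemma Rstep_par: "(s,t) \<in> R_step \<Longrightarrow> (s,t) \<in> par"
  unfolding R_step_def
  by (induct rule: ctxcl.induct) (auto intro: par.intros Rroot_par)

lemma Rstar_appL: "(a,a') \<in> R_step\<^sup>* \<Longrightarrow> (App a b, App a' b) \<in> R_step\<^sup>*"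
  by (induct rule: rtrancl_induct) (auto intro: rtrancl_into_rtrancl ctxcl.appL simp: R_step_def)
lemma Rstar_appR: "(b,b') \<in> R_step\<^sup>* \<Longrightarrow> (App a b, App a b') \<in> R_step\<^sup>*"
  by (induct rule: rtrancl_induct) (auto intro: rtrancl_into_rtrancl ctxcl.appR simp: R_step_def)
lemma Rstar_app: "(a,a') \<in> R_step\<^sup>* \<Longrightarrow> (b,b') \<in> R_step\<^sup>* \<Longrightarrow> (App a b, App a' b') \<in> R_step\<^sup>*"
  by (meson Rstar_appL Rstar_appR rtrancl_trans)

lemma root_R: "(s,t) \<in> R_root \<Longrightarrow> (s,t) \<in> R_step"
  unfolding R_step_def by (rule ctxcl.root)

lemma par_Rstar: "(s,t) \<in> par \<Longrightarrow> (s,t) \<in> R_step\<^sup>*"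
proof (induct rule: par.induct)
  case (refl t) then show ?case by simp
next
  case (app a a' b b') show ?case by (rule Rstar_app[OF app(2) app(4)])
next
  case (cT x x' y)
  have "(App (App (App Cc Tc) x) y, x) \<in> R_step" by (rule root_R) (auto simp: R_root_def)
  then show ?case using cT by (meson converse_rtrancl_into_rtrancl)
next
  case (cF z y y' x)
  have "(App (App (App Cc z) x) y, y) \<in> R_step" using cF by (intro root_R) (auto simp: R_root_def)
  then show ?case using cF by (meson converse_rtrancl_into_rtrancl)
next
  case (cX z x y x')
  have "(App (App (App Cc z) x) y, x) \<in> R_step" using cX by (intro root_R) (auto simp: R_root_def)
  then show ?case using cX by (meson converse_rtrancl_into_rtrancl)
next
  case (k x x' y)
  have "(App (App Kc x) y, x) \<in> R_step" by (rule root_R) (auto simp: R_root_def)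
  then show ?case using k by (meson converse_rtrancl_into_rtrancl)
next
  case (s x x' y y' z z')
  have "(App (App (App Sc x) y) z, App (App x z) (App y z)) \<in> R_step" by (rule root_R) (auto simp: R_root_def)
  moreover have "(App (App x z) (App y z), App (App x' z') (App y' z')) \<in> R_step\<^sup>*"
    using s(2,4,6) by (intro Rstar_app)
  ultimately show ?case by (meson converse_rtrancl_into_rtrancl)
qed

lemma star_eq: "R_step\<^sup>* = par\<^sup>*"
proof
  show "R_step\<^sup>* \<subseteq> par\<^sup>*" by (rule rtrancl_mono) (auto intro: Rstep_par)
  show "par\<^sup>* \<subseteq> R_step\<^sup>*" using par_Rstar by (metis rtrancl_subset_rtrancl subrelI)
qed

lemma strip: assumes "(a,c) \<in> par\<^sup>*" shows "\<And>b. (a,b) \<in> par \<Longrightarrow> \<exists>d. (b,d) \<in> par\<^sup>* \<and> (c,d) \<in> par"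
  using assms
proof (induct rule: rtrancl_induct)
  case base then show ?case by blast
next
  case (step y z b)
  then obtain d where d: "(b,d) \<in> par\<^sup>*" "(y,d) \<in> par" by blast
  have "(d, dev y) \<in> par" "(z, dev y) \<in> par" using par_dev d(2) step(2) by blast+
  then show ?case using d(1) by (meson rtrancl_into_rtrancl)
qed

lemma par_confl: assumes "(a,b) \<in> par\<^sup>*" shows "\<And>c. (a,c) \<in> par\<^sup>* \<Longrightarrow> \<exists>d. (b,d) \<in> par\<^sup>* \<and> (c,d) \<in> par\<^sup>*"
  using assms
proof (induct rule: rtrancl_induct)
  case base then show ?case by blast
next
  case (step y z c)
  then obtain d where d: "(y,d) \<in> par\<^sup>*" "(c,d) \<in> par\<^sup>*" by blast
  obtain e where e: "(z,e) \<in> par\<^sup>*" "(d,e) \<in> par" using strip[OF d(1) step(2)] by blast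
  show ?case using e d(2) by (meson rtrancl_into_rtrancl)
qed

theorem mainTheorem6:
  shows "confluent_rel (R_step :: ('v trm \<times> 'v trm) set)"
  unfolding confluent_rel_def star_eq using par_confl by blast

end
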